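(* Let $0\le m\le n$ and $\lambda=2^m1^{n-m}$. If $T,T'\in S(\lambda)$ have first-column entries $a_1,\dots,a_n$ and $a'_1,\dots,a'_n$ (top to bottom) with $\mathrm{dep}(a_i)=\mathrm{dep}(a'_i)$ for all $1\le i\le n$, then $T=T'$.
   Context: $\lambda=2^m1^{n-m}$ is the shape with $m$ rows of length $2$ followed by $n-m$ rows of length $1$ (left-justified), $N=n+m$ boxes. $S(\lambda)$: standard Young tableaux of shape $\lambda$ (entries $1,\dots,N$ once each, rows strictly increasing left to right, columns strictly increasing top to bottom). For an entry $v$ of $T$ in column $j$: $\mathrm{dep}(v)$ = (number of entries of column $j$ smaller than $v$) minus (number of entries of column $j+1$ smaller than $v$, or $0$ if there is no column $j+1$). *)

theory Defs
  imports Main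
begin

text \<open>A tableau is represented by its list of columns (left to right), each column
  listed top to bottom.  For the shape lambda = 2^m 1^(n-m) there is one column of
  length n and, if m > 0, a second column of length m.\<close>

definition shape_cols :: "nat \<Rightarrow> nat \<Rightarrow> nat list" where
  "shape_cols n m = (if m = 0 then [n] else [n, m])"

definition SYT :: "nat \<Rightarrow> nat \<Rightarrow> nat list list \<Rightarrow> bool" where
  "SYT n m T \<longleftrightarrow>
     map length T = shape_cols n m \<and>
     (\<forall>c\<in>set T. sorted_wrt (<) c) \<and>
     (\<forall>j i. Suc j < length T \<longrightarrow> i < length (T ! Suc j) \<longrightarrow> T ! j ! i < T ! Suc j ! i) \<and>
     distinct (concat T) \<and>
     set (concat T) = {1..n + m}"

definition col_of :: "nat list list \<Rightarrow> nat \<Rightarrow> nat" where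
  "col_of T v = (LEAST j. j < length T \<and> v \<in> set (T ! j))"

definition count_less :: "nat list \<Rightarrow> nat \<Rightarrow> nat" where
  "count_less c v = card {x \<in> set c. x < v}"

definition dep :: "nat list list \<Rightarrow> nat \<Rightarrow> int" where
  "dep T v = (let j = col_of T v in
      int (count_less (T ! j) v)
      - (if Suc j < length T then int (count_less (T ! Suc j) v) else 0))"

end

theory Submission
  imports Defs
begin

lemma cl_sorted:
  assumes "sorted_wrt (<) c" "i < length c"
  shows "count_less c (c!i) = i"
proof -
  have "{x \<in> set c. x < c!i} = (!) c ` {..<i}"
  proof (rule set_eqI, rule iffI)
    fix x assume "x \<in> {x \<in> set c. x < c!i}"
    then obtain j where j: "j < length c" "x = c!j" "c!j < c!i" by (auto simp: in_set_conv_nth)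
    have "j < i"
    proof (rule ccontr)
      assume "\<not> j < i"
      then have "i \<le> j" by simp
      then have "c!i \<le> c!j" using assms j
        by (metis le_neq_implies_less order.order_iff_strict sorted_wrt_nth_less)
      then show False using j by simp
    qed
    then show "x \<in> (!) c ` {..<i}" using j by auto
  next
    fix x assume "x \<in> (!) c ` {..<i}"
    then obtain j where "j < i" "x = c!j" by auto
    then show "x \<in> {x \<in> set c. x < c!i}" using assms
      by (auto simp: sorted_wrt_nth_less)
  qed
  moreover have "inj_on ((!) c) {..<i}"
    using assms by (auto simp: inj_on_def nth_eq_iff_index_eq strict_sorted_iff)
  ultimately show ?thesis unfolding count_less_def by (simp add: card_image)
qed

lemma cl_union:
  assumes "set a \<inter> set b = {}" "set a \<union> set b = {1..N}" "1 \<le> v" "v \<le> N"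
  shows "count_less a v + count_less b v = v - 1"
proof -
  have "{x \<in> set a. x < v} \<union> {x \<in> set b. x < v} = {1..<v}"
    using assms by auto
  moreover have "card ({x \<in> set a. x < v} \<union> {x \<in> set b. x < v})
     = card {x \<in> set a. x < v} + card {x \<in> set b. x < v}"
    by (rule card_Un_disjoint) (use assms in auto)
  ultimately show ?thesis unfolding count_less_def by simp
qed

lemma cl_single:
  assumes "set a = {1..N}" "1 \<le> v" "v \<le> N"
  shows "count_less a v = v - 1"
proof -
  have "{x \<in> set a. x < v} = {1..<v}" using assms by auto
  then show ?thesis unfolding count_less_def by simp
qed

lemma dep_formula:
  assumes T: "SYT n m T" and i: "i < n"
  shows "dep T (T!0!i) = 2 * int i + 1 - int (T!0!i)"
proof -
  have main: "dep T (T!0!i) = 2 * int i + 1 - int (T!0!i)" if H: "T!0!i = v" "dep T v = 2 * int i + 1 - int v" for v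
    using H by simp
  obtain c0 where c0: "T!0 = c0" "length c0 = n" "sorted_wrt (<) c0"
    using T unfolding SYT_def shape_cols_def
    by (cases T) (auto split: if_splits)
  define v where "v = c0 ! i"
  have vin: "v \<in> set c0" using c0 i v_def by simp
  have Tne: "T \<noteq> []" using T unfolding SYT_def shape_cols_def by (auto split: if_splits)
  have col: "col_of T v = 0"
    unfolding col_of_def using vin c0 Tne by (intro Least_eq_0) simp
  have cli: "count_less c0 v = i" using cl_sorted c0 i v_def by simp
  have vN: "v \<in> {1..n+m}" using T vin c0 Tne unfolding SYT_def
    by (metis UN_iff list.set_sel(1) nth_Cons_0 set_concat list.collapse)
  show ?thesis
  proof (cases "m = 0")
    case True
    then have "T = [c0]" using T c0 unfolding SYT_def shape_cols_def
      by (cases T) auto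
    then have "set c0 = {1..n+m}" using T unfolding SYT_def by simp
    then have "count_less c0 v = v - 1" using cl_single vN by auto
    then have "dep T v = 2 * int i + 1 - int v" using col cli \<open>T = [c0]\<close> vN unfolding dep_def
      by (simp add: Let_def)
    then show ?thesis using main c0 v_def by simp
  next
    case False
    then obtain c1 where "T = [c0, c1]" using T c0 unfolding SYT_def shape_cols_def
      by (cases T; cases "tl T") auto
    then have "set c0 \<inter> set c1 = {}" "set c0 \<union> set c1 = {1..n+m}"
      using T unfolding SYT_def by auto
    then have "count_less c0 v + count_less c1 v = v - 1" using cl_union vN by auto
    then have "dep T v = 2 * int i + 1 - int v" using col cli \<open>T = [c0, c1]\<close> vN unfolding dep_def
      by (simp add: Let_def) linarith
    then show ?thesis using main c0 v_def by simp
  qed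
qed

lemma sorted_set_eq:
  fixes a b :: "nat list"
  assumes "sorted_wrt (<) a" "sorted_wrt (<) b" "set a = set b"
  shows "a = b"
  using strict_sorted_equal[OF assms(2,1)] assms(3) by simp

theorem mainTheorem16:
  fixes n m :: nat and T T' :: "nat list list"
  assumes "m \<le> n"
    and "SYT n m T" and "SYT n m T'"
    and "\<forall>i < n. dep T (T ! 0 ! i) = dep T' (T' ! 0 ! i)"
  shows "T = T'"
proof -
  obtain c0 where c0: "T!0 = c0" "length c0 = n" "sorted_wrt (<) c0"
    using assms(2) unfolding SYT_def shape_cols_def
    by (cases T) (auto split: if_splits)
  obtain d0 where d0: "T'!0 = d0" "length d0 = n" "sorted_wrt (<) d0"
    using assms(3) unfolding SYT_def shape_cols_def
    by (cases T') (auto split: if_splits)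
  have "\<forall>i<n. c0!i = d0!i"
  proof (intro allI impI)
    fix i assume "i < n"
    then have "2 * int i + 1 - int (c0!i) = 2 * int i + 1 - int (d0!i)"
      using dep_formula[OF assms(2)] dep_formula[OF assms(3)] assms(4) c0 d0 by metis
    then show "c0!i = d0!i" by simp
  qed
  then have eq0: "c0 = d0" using c0 d0 by (simp add: nth_equalityI)
  show ?thesis
  proof (cases "m = 0")
    case True
    then show ?thesis using assms(2,3) c0 d0 eq0 unfolding SYT_def shape_cols_def
      by (cases T; cases T') auto
  next
    case False
    obtain c1 where Tc: "T = [c0, c1]" using False assms(2) c0 unfolding SYT_def shape_cols_def
      by (cases T; cases "tl T") auto
    obtain d1 where Td: "T' = [d0, d1]" using False assms(3) d0 unfolding SYT_def shape_cols_def
      by (cases T'; cases "tl T'") auto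
    have "set c1 = {1..n+m} - set c0" using assms(2) Tc unfolding SYT_def by auto
    moreover have "set d1 = {1..n+m} - set d0" using assms(3) Td unfolding SYT_def by auto
    moreover have "sorted_wrt (<) c1" "sorted_wrt (<) d1" using assms(2,3) Tc Td unfolding SYT_def by auto
    ultimately have "c1 = d1" using eq0 sorted_set_eq by metis
    then show ?thesis using Tc Td eq0 by simp
  qed
qed

end
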